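(* Let $b>1$, $p\in\mathbb{R}$, $s<pb$, and set $\tilde c_s=\frac{p^2-s^2-b^2+1}{2(pb-s)}$ and $\tilde A_s=s^2-2\tilde c_ss-1$ $(=p^2-2bp\tilde c_s-b^2)$. The following are equivalent: (1) $s\ge\tilde c_s$; (2) there exists a unique function $\tilde\psi_s$, continuous on $[1,b]$ and differentiable on $(1,b)$, with $\tilde\psi_s(1)=s$, $\tilde\psi_s(b)=p$ and $\tilde\psi_s^2-2\tilde c_sx\tilde\psi_s-x^2=\tilde A_s$ on $[1,b]$; explicitly $\tilde\psi_s(x)=\tilde c_sx+\sqrt{\tilde A_s+(1+\tilde c_s^2)x^2}$. Moreover this solution satisfies $(x\tilde\psi_s)'>0$. *)

theory Defs
  imports "HOL-Analysis.Analysis"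
begin

definition c_tilde :: "real \<Rightarrow> real \<Rightarrow> real \<Rightarrow> real" where
  "c_tilde b p s = (p^2 - s^2 - b^2 + 1) / (2 * (p * b - s))"

definition A_tilde :: "real \<Rightarrow> real \<Rightarrow> real \<Rightarrow> real" where
  "A_tilde b p s = s^2 - 2 * c_tilde b p s * s - 1"

definition psi_cond :: "real \<Rightarrow> real \<Rightarrow> real \<Rightarrow> (real \<Rightarrow> real) \<Rightarrow> bool" where
  "psi_cond b p s \<psi> \<longleftrightarrow>
     continuous_on {1..b} \<psi> \<and> \<psi> differentiable_on {1<..<b} \<and>
     \<psi> 1 = s \<and> \<psi> b = p \<and>
     (\<forall>x\<in>{1..b}. (\<psi> x)^2 - 2 * c_tilde b p s * x * \<psi> x - x^2 = A_tilde b p s)"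

end

theory Submission
  imports Defs
begin

definition pc :: "real \<Rightarrow> real \<Rightarrow> real \<Rightarrow> real \<Rightarrow> real \<Rightarrow> (real \<Rightarrow> real) \<Rightarrow> bool" where
  "pc b p s c A \<phi> \<longleftrightarrow> continuous_on {1..b} \<phi> \<and> \<phi> differentiable_on {1<..<b} \<and>
     \<phi> 1 = s \<and> \<phi> b = p \<and> (\<forall>x\<in>{1..b}. (\<phi> x)^2 - 2 * c * x * \<phi> x - x^2 = A)"

lemma psi_pc: "psi_cond b p s = pc b p s (c_tilde b p s) (A_tilde b p s)"
  unfolding psi_cond_def pc_def by (intro ext) simp

lemma D_pos:
  fixes s c A x :: real
  assumes hA: "A = s^2 - 2*c * s - 1" and x: "x > 1"
  shows "A + (1 + c^2) * x^2 > 0"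
proof -
  have "x^2 > 1" using x by (simp add: one_less_power)
  hence "(1 + c^2) * (x^2 - 1) > 0" by (simp add: add_pos_nonneg)
  moreover have "(s - c)^2 \<ge> 0" by simp
  ultimately show ?thesis using hA by (simp add: power2_eq_square algebra_simps)
qed

lemma D_nonneg:
  fixes s c A x :: real
  assumes hA: "A = s^2 - 2*c * s - 1" and x: "x \<ge> 1"
  shows "A + (1 + c^2) * x^2 \<ge> 0"
proof (cases "x = 1")
  case True
  have "A + (1 + c^2) * x^2 = (s - c)^2" using hA True by (simp add: power2_eq_square algebra_simps)
  thus ?thesis by simp
next
  case False
  hence "x > 1" using x by simp
  thus ?thesis using D_pos[OF hA, of x] by simp
qed

lemma pcb_pos:
  fixes b p s c :: real
  assumes b: "b > 1" and sp: "s < p*b" and hc: "c * (2*(p*b - s)) = p^2 - s^2 - b^2 + 1"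
  shows "p - c * b > 0"
proof -
  have "2*(p*b - s)*(p - c * b) = 2*p*(p*b-s) - b*(c*(2*(p*b-s)))" by (simp add: algebra_simps)
  also have "\<dots> = 2*p*(p*b-s) - b*(p^2-s^2-b^2+1)" using hc by simp
  also have "\<dots> = b*(p^2+s^2+b^2-1) - 2*p * s" by (simp add: algebra_simps power2_eq_square)
  finally have e: "2*(p*b - s)*(p - c * b) = b*(p^2+s^2+b^2-1) - 2*p * s" .
  have "b*(p^2+s^2) \<ge> p^2+s^2" using mult_right_mono[of 1 b "p^2+s^2"] b by simp
  moreover have "p^2 + s^2 \<ge> 2*p * s" using sum_squares_bound[of p s] by simp
  moreover have "b*(b^2-1) > 0" using b by (simp add: one_less_power)
  ultimately have "2*(p*b - s)*(p - c * b) > 0" unfolding e by (simp add: algebra_simps)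
  thus ?thesis using sp by (simp add: zero_less_mult_iff)
qed

lemma sign_lemma:
  fixes b p s c A :: real
  assumes b: "b > 1" and hA: "A = s^2 - 2*c * s - 1" and pcb: "p - c * b > 0"
    and P: "pc b p s c A \<phi>" and x: "x \<in> {1<..b}"
  shows "\<phi> x - c * x > 0"
proof (rule ccontr)
  assume "\<not> ?thesis"
  hence le: "\<phi> x - c * x \<le> 0" by simp
  have cont: "continuous_on {1..b} (\<lambda>y. \<phi> y - c * y)" using P unfolding pc_def
    by (intro continuous_intros) auto
  have "continuous_on {x..b} (\<lambda>y. \<phi> y - c * y)"
    by (rule continuous_on_subset[OF cont]) (use x in auto)
  moreover have "(\<lambda>y. \<phi> y - c * y) b \<ge> 0" using P pcb unfolding pc_def by simp
  ultimately obtain z where z: "x \<le> z" "z \<le> b" "\<phi> z - c * z = 0"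
    using IVT'[of "\<lambda>y. \<phi> y - c * y" x 0 b] le x by auto
  have q: "(\<phi> z)^2 - 2*c * z*\<phi> z - z^2 = A" using P z(1,2) x unfolding pc_def by auto
  have "\<phi> z = c * z" using z by simp
  with q have "A + (1 + c^2) * z^2 = 0" by (simp add: power2_eq_square algebra_simps)
  moreover have "z > 1" using x z by auto
  ultimately show False using D_pos[OF hA] by force
qed

lemma main:
  fixes b p s c A :: real
  assumes b: "b > 1" and sp: "s < p*b"
    and hc: "c * (2*(p*b - s)) = p^2 - s^2 - b^2 + 1"
    and hA: "A = s^2 - 2*c * s - 1"
  shows "(s \<ge> c \<longleftrightarrow>
           (\<exists>\<psi>. pc b p s c A \<psi> \<and>
              (\<forall>\<phi>. pc b p s c A \<phi> \<longrightarrow> (\<forall>x\<in>{1..b}. \<phi> x = \<psi> x)))) \<and>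
         (s \<ge> c \<longrightarrow>
           (\<forall>\<psi>. pc b p s c A \<psi> \<longrightarrow>
             (\<forall>x\<in>{1..b}. \<psi> x = c * x + sqrt (A + (1 + c^2) * x^2)) \<and>
             (\<forall>x\<in>{1<..<b}. deriv (\<lambda>t. t * \<psi> t) x > 0)))"
proof -
  have pcb: "p - c * b > 0" using pcb_pos[OF b sp hc] .
  have hA2: "A = p^2 - 2*b*p*c - b^2" using hc hA sp
    by (simp add: power2_eq_square algebra_simps)
  define P where "P = (\<lambda>x. c * x + sqrt (A + (1 + c^2) * x^2))"
  have eqP: "\<phi> x = P x" if ph: "pc b p s c A \<phi>" and x: "x \<in> {1<..b}" for \<phi> x
  proof -
    have g: "\<phi> x - c * x > 0" using sign_lemma[OF b hA pcb ph x] .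
    have q: "(\<phi> x)^2 - 2*c * x*\<phi> x - x^2 = A" using ph x unfolding pc_def by auto
    have "(\<phi> x - c * x)^2 = A + (1 + c^2) * x^2" using q by (simp add: power2_eq_square algebra_simps)
    hence "sqrt (A + (1 + c^2) * x^2) = \<phi> x - c * x" using g by (metis real_sqrt_abs abs_of_pos)
    thus ?thesis unfolding P_def by simp
  qed
  have no_sol: "\<not> pc b p s c A \<phi>" if sc: "s < c" for \<phi>
  proof
    assume ph: "pc b p s c A \<phi>"
    have cont: "continuous_on {1..b} (\<lambda>y. \<phi> y - c * y)" using ph unfolding pc_def
      by (intro continuous_intros) auto
    have "(\<lambda>y. \<phi> y - c * y) 1 \<le> 0" "(\<lambda>y. \<phi> y - c * y) b \<ge> 0" using ph pcb sc unfolding pc_def by auto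
    then obtain z where z: "1 \<le> z" "z \<le> b" "\<phi> z - c * z = 0"
      using IVT'[of "\<lambda>y. \<phi> y - c * y" 1 0 b, OF _ _ _ cont] b by auto
    have "z \<noteq> 1" using z ph sc unfolding pc_def by auto
    hence zz: "z \<in> {1<..b}" using z by auto
    show False using sign_lemma[OF b hA pcb ph zz] z by simp
  qed
  have Dpos: "A + (1 + c^2) * x^2 > 0" if "x > 1" for x using D_pos[OF hA that] .
  have P1: "P 1 = s" if sc: "s \<ge> c"
  proof -
    have "A + (1 + c^2) * 1^2 = (s - c)^2" using hA by (simp add: power2_eq_square algebra_simps)
    thus ?thesis unfolding P_def using sc by simp
  qed
  have Pb: "P b = p"
  proof -
    have "A + (1 + c^2) * b^2 = (p - c * b)^2" using hA2 by (simp add: power2_eq_square algebra_simps)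
    thus ?thesis unfolding P_def using pcb by simp
  qed
  have derP: "(P has_real_derivative c * 1 + inverse (sqrt (A + (1 + c^2) * x^2)) / 2 * ((1 + c^2) * (2 * x))) (at x)"
    if x: "x > 1" for x
  proof -
    have pos: "A + (1 + c^2) * x^2 > 0" using Dpos[OF x] .
    have d0: "((\<lambda>x. A + (1 + c^2) * x^2) has_real_derivative (1 + c^2) * (2 * x)) (at x)"
      by (auto intro!: derivative_eq_intros)
    have d1: "((\<lambda>x. sqrt (A + (1 + c^2) * x^2)) has_real_derivative
        inverse (sqrt (A + (1 + c^2) * x^2)) / 2 * ((1 + c^2) * (2 * x))) (at x)"
      using DERIV_chain2[OF DERIV_real_sqrt[OF pos] d0] .
    show ?thesis unfolding P_def
      by (rule DERIV_add[OF DERIV_cmult[OF DERIV_ident] d1])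
  qed
  have Psol: "pc b p s c A P" if sc: "s \<ge> c"
  proof -
    have "continuous_on {1..b} P" unfolding P_def by (intro continuous_intros)
    moreover have "P differentiable_on {1<..<b}"
      using derP by (meson differentiable_at_withinI real_differentiable_def greaterThanLessThan_iff differentiable_on_def)
    moreover have "\<forall>x\<in>{1..b}. (P x)^2 - 2 * c * x * P x - x^2 = A"
    proof
      fix x assume "x \<in> {1..b}"
      hence "A + (1 + c^2) * x^2 \<ge> 0" using D_nonneg[OF hA] by auto
      hence "(sqrt (A + (1 + c^2) * x^2))^2 = A + (1 + c^2) * x^2" by simp
      thus "(P x)^2 - 2 * c * x * P x - x^2 = A" unfolding P_def
        by (simp add: power2_eq_square algebra_simps)
    qed
    ultimately show ?thesis unfolding pc_def using P1[OF sc] Pb by auto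
  qed
  have eqP_all: "\<forall>x\<in>{1..b}. \<phi> x = P x" if sc: "s \<ge> c" and ph: "pc b p s c A \<phi>" for \<phi>
  proof
    fix x assume x: "x \<in> {1..b}"
    show "\<phi> x = P x"
    proof (cases "x = 1")
      case True thus ?thesis using ph P1[OF sc] unfolding pc_def by simp
    next
      case False thus ?thesis using eqP[OF ph] x by auto
    qed
  qed
  have derpos: "deriv (\<lambda>t. t * \<psi> t) x > 0" if ph: "pc b p s c A \<psi>" and x: "x \<in> {1<..<b}" for \<psi> x
  proof -
    let ?D = "A + (1 + c^2) * x^2"
    have pos: "?D > 0" using Dpos x by auto
    have d1: "((\<lambda>t. t * P t) has_real_derivative (x * (c * 1 + inverse (sqrt ?D) / 2 * ((1 + c^2) * (2 * x))) * 1 + 1 * P x)) (at x)"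
      using DERIV_mult'[OF DERIV_ident derP[of x]] x by auto
    have d2: "((\<lambda>t. t * \<psi> t) has_real_derivative (x * (c * 1 + inverse (sqrt ?D) / 2 * ((1 + c^2) * (2 * x))) * 1 + 1 * P x)) (at x)"
      by (rule has_field_derivative_transform_within_open[OF d1, of "{1<..<b}"])
         (use x eqP[OF ph] in auto)
    have sq: "sqrt ?D * sqrt ?D = ?D" using pos by simp
    have sp': "sqrt ?D > 0" using pos by simp
    have "x * (c * 1 + inverse (sqrt ?D) / 2 * ((1 + c^2) * (2 * x))) * 1 + 1 * P x = ((sqrt ?D + c * x)^2 + x^2) / sqrt ?D"
      unfolding P_def using sp' sq by (simp add: field_simps power2_eq_square)
    also have "\<dots> > 0" using sp' x by (intro divide_pos_pos add_nonneg_pos) auto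
    finally show ?thesis using DERIV_imp_deriv[OF d2] by simp
  qed
  show ?thesis
  proof (intro conjI impI allI)
    show "(c \<le> s) = (\<exists>\<psi>. pc b p s c A \<psi> \<and> (\<forall>\<phi>. pc b p s c A \<phi> \<longrightarrow> (\<forall>x\<in>{1..b}. \<phi> x = \<psi> x)))"
    proof
      assume sc: "c \<le> s"
      show "\<exists>\<psi>. pc b p s c A \<psi> \<and> (\<forall>\<phi>. pc b p s c A \<phi> \<longrightarrow> (\<forall>x\<in>{1..b}. \<phi> x = \<psi> x))"
        using Psol[OF sc] eqP_all[OF sc] by blast
    next
      assume "\<exists>\<psi>. pc b p s c A \<psi> \<and> (\<forall>\<phi>. pc b p s c A \<phi> \<longrightarrow> (\<forall>x\<in>{1..b}. \<phi> x = \<psi> x))"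
      thus "c \<le> s" using no_sol by force
    qed
  next
    fix \<psi> assume "c \<le> s" "pc b p s c A \<psi>"
    thus "\<forall>x\<in>{1..b}. \<psi> x = c * x + sqrt (A + (1 + c^2) * x^2)"
      using eqP_all unfolding P_def by blast
  next
    fix \<psi> assume "c \<le> s" "pc b p s c A \<psi>"
    thus "\<forall>x\<in>{1<..<b}. deriv (\<lambda>t. t * \<psi> t) x > 0" using derpos by blast
  qed
qed

theorem lemma4p5:
  fixes b p s :: real
  assumes "b > 1" and "s < p * b"
  shows "(s \<ge> c_tilde b p s \<longleftrightarrow>
           (\<exists>\<psi>. psi_cond b p s \<psi> \<and>
              (\<forall>\<phi>. psi_cond b p s \<phi> \<longrightarrow> (\<forall>x\<in>{1..b}. \<phi> x = \<psi> x)))) \<and>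
         (s \<ge> c_tilde b p s \<longrightarrow>
           (\<forall>\<psi>. psi_cond b p s \<psi> \<longrightarrow>
             (\<forall>x\<in>{1..b}. \<psi> x = c_tilde b p s * x
                 + sqrt (A_tilde b p s + (1 + (c_tilde b p s)^2) * x^2)) \<and>
             (\<forall>x\<in>{1<..<b}. deriv (\<lambda>t. t * \<psi> t) x > 0)))"
proof -
  have hc: "c_tilde b p s * (2*(p*b - s)) = p^2 - s^2 - b^2 + 1"
    using assms unfolding c_tilde_def by (simp add: mult.commute)
  have hA: "A_tilde b p s = s^2 - 2 * c_tilde b p s * s - 1" unfolding A_tilde_def by simp
  show ?thesis unfolding psi_pc using main[OF assms hc hA] .
qed

end
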